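(* Let $p\ge 2$ and let $J$ be a periodic Jacobi operator on $\ell^2(\mathbb{Z})$ with period $p$, given by $(J\psi)_n=a_{n-1}\psi_{n-1}+b_n\psi_n+a_n\psi_{n+1}$, where $a_n>0$, $b_n\in\mathbb{R}$, $a_{n+p}=a_n$, $b_{n+p}=b_n$ for all $n\in\mathbb{Z}$. Let $A:=(a_1a_2\cdots a_p)^{1/p}$, let $\sigma_1,\dots,\sigma_p$ be the spectral bands of $J$, and let $s:=\lambda_p^{\max}-\lambda_1^{\min}$. If $d$ is a real number with $s\le d$, then $$\frac{1}{\log(d/A)}\le\sum_{n=1}^{p}\frac{1}{\log\big(4d/|\sigma_n|\big)}.$$
   Context: Spectral structure: the spectrum of $J$ is $\sigma(J)=\{\lambda\in\mathbb{R}: |\Delta(\lambda)|\le 2\}$, where $\Delta(\lambda)=\operatorname{tr}\big(A_p(\lambda)A_{p-1}(\lambda)\cdots A_1(\lambda)\big)$ with $A_n(\lambda)=\begin{pmatrix}(\lambda-b_n)/a_n & -a_{n-1}/a_n\\ 1&0\end{pmatrix}$ (the discriminant, a real polynomial of degree $p$). It is a standard fact that this set is a union of $p$ closed intervals (bands) $\sigma_n=[\lambda_n^{\min},\lambda_n^{\max}]$, $1\le n\le p$, with $\lambda_n^{\min}<\lambda_n^{\max}\le\lambda_{n+1}^{\min}$ (bands may touch but do not overlap); on each band $\Delta$ is monotone and maps it onto $[-2,2]$. The spectral gaps are $\gamma_n=(\lambda_n^{\max},\lambda_{n+1}^{\min})$, $1\le n\le p-1$ (possibly empty). $|\cdot|$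 denotes Lebesgue measure (length). *)

theory Defs
  imports "HOL-Analysis.Analysis"
begin

definition transfer_mat :: "(int \<Rightarrow> real) \<Rightarrow> (int \<Rightarrow> real) \<Rightarrow> int \<Rightarrow> real \<Rightarrow> real^2^2" where
  "transfer_mat a b n x =
     vector [vector [(x - b n) / a n, - a (n - 1) / a n], vector [1, 0]]"

fun monodromy :: "(int \<Rightarrow> real) \<Rightarrow> (int \<Rightarrow> real) \<Rightarrow> nat \<Rightarrow> real \<Rightarrow> real^2^2" where
  "monodromy a b 0 x = mat 1"
| "monodromy a b (Suc k) x = transfer_mat a b (int (Suc k)) x ** monodromy a b k x"

definition discriminant :: "(int \<Rightarrow> real) \<Rightarrow> (int \<Rightarrow> real) \<Rightarrow> nat \<Rightarrow> real \<Rightarrow> real" where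
  "discriminant a b p x = trace (monodromy a b p x)"

definition jacobi_spectrum :: "(int \<Rightarrow> real) \<Rightarrow> (int \<Rightarrow> real) \<Rightarrow> nat \<Rightarrow> real set" where
  "jacobi_spectrum a b p = {x. \<bar>discriminant a b p x\<bar> \<le> 2}"

definition is_band_decomposition ::
  "(int \<Rightarrow> real) \<Rightarrow> (int \<Rightarrow> real) \<Rightarrow> nat \<Rightarrow> (nat \<Rightarrow> real) \<Rightarrow> (nat \<Rightarrow> real) \<Rightarrow> bool" where
  "is_band_decomposition a b p lmin lmax \<longleftrightarrow>
     jacobi_spectrum a b p = (\<Union>n\<in>{1..p}. {lmin n..lmax n}) \<and>
     (\<forall>n\<in>{1..p}. lmin n < lmax n) \<and>
     (\<forall>n\<in>{1..<p}. lmax n \<le> lmin (Suc n)) \<and>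
     (\<forall>n\<in>{1..p}. (mono_on {lmin n..lmax n} (discriminant a b p) \<or>
                    antimono_on {lmin n..lmax n} (discriminant a b p)) \<and>
                   discriminant a b p ` {lmin n..lmax n} = {-2..2})"

end

theory Submission
  imports Defs "HOL-Computational_Algebra.Polynomial"
begin


fun Up :: "(int \<Rightarrow> real) \<Rightarrow> (int \<Rightarrow> real) \<Rightarrow> real poly \<Rightarrow> real poly \<Rightarrow> nat \<Rightarrow> real poly" where
  "Up a b u0 u1 0 = u0"
| "Up a b u0 u1 (Suc 0) = u1"
| "Up a b u0 u1 (Suc (Suc k)) =
     [:- b (int (Suc k)) / a (int (Suc k)), 1 / a (int (Suc k)):] * Up a b u0 u1 (Suc k)
     - smult (a (int k) / a (int (Suc k))) (Up a b u0 u1 k)"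

lemma monodromy_poly:
  "monodromy a b k x $ 1 $ 1 = poly (Up a b 0 1 (Suc k)) x \<and>
   monodromy a b k x $ 1 $ 2 = poly (Up a b 1 0 (Suc k)) x \<and>
   monodromy a b k x $ 2 $ 1 = poly (Up a b 0 1 k) x \<and>
   monodromy a b k x $ 2 $ 2 = poly (Up a b 1 0 k) x"
proof (induction k)
  case 0
  then show ?case by (simp add: mat_def)
next
  case (Suc k)
  then show ?case
    by (simp add: matrix_matrix_mult_def sum_2 transfer_mat_def algebra_simps diff_divide_distrib)
qed

lemma discriminant_poly:
  "discriminant a b p x = poly (Up a b 0 1 (Suc p) + Up a b 1 0 p) x"
  using monodromy_poly[of a b p x] by (simp add: discriminant_def trace_def sum_2)

lemma degV: "degree (Up a b 1 0 k) \<le> k - 1"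
proof (induction k rule: less_induct)
  case (less k)
  show ?case
  proof (cases k)
    case 0 then show ?thesis by simp
  next
    case (Suc m)
    show ?thesis
    proof (cases m)
      case 0 then show ?thesis using Suc by simp
    next
      case (Suc j)
      have "degree (Up a b 1 0 (Suc j)) \<le> j" using less[of "Suc j"] \<open>k = Suc m\<close> Suc by simp
      moreover have "degree (Up a b 1 0 j) \<le> j" using less[of j] \<open>k = Suc m\<close> Suc by simp
      define l where "l = [:- b (int (Suc j)) / a (int (Suc j)), 1 / a (int (Suc j)):]"
      have dl: "degree l \<le> 1" unfolding l_def by (simp add: degree_pCons_le)
      have "degree (l * Up a b 1 0 (Suc j)) \<le> Suc j"
        using degree_mult_le[of l "Up a b 1 0 (Suc j)"] dl \<open>degree (Up a b 1 0 (Suc j)) \<le> j\<close> by linarith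
      moreover have "Up a b 1 0 k = l * Up a b 1 0 (Suc j) - smult (a (int j) / a (int (Suc j))) (Up a b 1 0 j)"
        using \<open>k = Suc m\<close> Suc l_def by simp
      ultimately show ?thesis using \<open>k = Suc m\<close> Suc \<open>degree (Up a b 1 0 j) \<le> j\<close>
        by (auto intro!: order.trans[OF degree_diff_le])
    qed
  qed
qed

lemma degU:
  assumes "\<And>n. a n > 0"
  shows "degree (Up a b 0 1 (Suc k)) = k \<and> lead_coeff (Up a b 0 1 (Suc k)) = (\<Prod>j=1..k. 1 / a (int j))"
proof (induction k rule: less_induct)
  case (less k)
  show ?case
  proof (cases k)
    case 0 then show ?thesis by simp
  next
    case (Suc m)
    let ?l = "[:- b (int (Suc m)) / a (int (Suc m)), 1 / a (int (Suc m)):]"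
    have IH: "degree (Up a b 0 1 (Suc m)) = m" "lead_coeff (Up a b 0 1 (Suc m)) = (\<Prod>j=1..m. 1 / a (int j))"
      using less[of m] Suc by auto
    have low: "degree (Up a b 0 1 m) < Suc m"
    proof (cases m)
      case 0 then show ?thesis by simp
    next
      case (Suc j) then show ?thesis using less[of j] \<open>k = Suc m\<close> by simp
    qed
    have l0: "?l \<noteq> 0" "degree ?l = 1" "lead_coeff ?l = 1 / a (int (Suc m))" using assms[of "int (Suc m)"] by auto
    have nz: "Up a b 0 1 (Suc m) \<noteq> 0"
    proof
      assume "Up a b 0 1 (Suc m) = 0"
      then have "(\<Prod>j=1..m. 1 / a (int j)) = 0" using IH by simp
      then obtain i where "a (int i) = 0" by auto
      with assms[of "int i"] show False by simp
    qed
    have d1: "degree (?l * Up a b 0 1 (Suc m)) = Suc m" using degree_mult_eq[OF l0(1) nz] l0 IH by simp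
    have d2: "degree (smult (a (int m) / a (int (Suc m))) (Up a b 0 1 m)) < Suc m"
      using low by (simp add: order.strict_trans1[OF degree_smult_le])
    have eq: "Up a b 0 1 (Suc k) = ?l * Up a b 0 1 (Suc m) + - smult (a (int m) / a (int (Suc m))) (Up a b 0 1 m)"
      using Suc by simp
    have dd: "degree (Up a b 0 1 (Suc k)) = Suc m"
      unfolding eq using d1 d2 by (subst degree_add_eq_left) auto
    have "lead_coeff (Up a b 0 1 (Suc k)) = lead_coeff (?l * Up a b 0 1 (Suc m))"
    proof -
      define X where "X = ?l * Up a b 0 1 (Suc m)"
      define q where "q = smult (a (int m) / a (int (Suc m))) (Up a b 0 1 m)"
      have "coeff q (Suc m) = 0" using d2 unfolding q_def[symmetric] by (intro coeff_eq_0) simp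
      then have "coeff (X + - q) (Suc m) = coeff X (Suc m)" by simp
      moreover have "Up a b 0 1 (Suc k) = X + - q" using eq unfolding X_def q_def .
      moreover have "degree X = Suc m" using d1 unfolding X_def .
      ultimately show ?thesis using dd unfolding X_def[symmetric] by metis
    qed
    also have "\<dots> = (\<Prod>j=1..Suc m. 1 / a (int j))"
      unfolding lead_coeff_mult l0(3) IH(2) by (simp add: prod.cl_ivl_Suc)
    finally show ?thesis using dd Suc by simp
  qed
qed



lemma prod_dvd_roots:
  fixes D :: "real poly"
  assumes "finite S" "inj_on z S" "\<forall>k\<in>S. poly D (z k) = 0"
  shows "(\<Prod>k\<in>S. [:-z k, 1:]) dvd D"
  using assms
proof (induction S rule: finite_induct)
  case empty then show ?case by simp
next
  case (insert i S)
  then have "(\<Prod>k\<in>S. [:-z k, 1:]) dvd D" by auto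
  then obtain Q where Q: "D = (\<Prod>k\<in>S. [:-z k, 1:]) * Q" by (auto elim: dvdE)
  have "poly D (z i) = 0" using insert by auto
  then have "(\<Prod>k\<in>S. z i - z k) * poly Q (z i) = 0" by (simp add: Q poly_prod)
  moreover have "(\<Prod>k\<in>S. z i - z k) \<noteq> 0"
    using insert(1,2,4) by (auto simp: prod_zero_iff inj_on_def)
  ultimately have "poly Q (z i) = 0" by simp
  then have "[:-z i, 1:] dvd Q" by (simp add: poly_eq_0_iff_dvd)
  then obtain R where R: "Q = [:-z i, 1:] * R" by (auto elim: dvdE)
  have "(\<Prod>k\<in>insert i S. [:-z k, 1:]) = [:-z i, 1:] * (\<Prod>k\<in>S. [:-z k, 1:])"
    by (rule prod.insert[OF insert(1,2)])
  then have "D = (\<Prod>k\<in>insert i S. [:-z k, 1:]) * R" using Q R by (simp only: mult_ac)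
  then show ?case by simp
qed

lemma root_bound:
  fixes D :: "real poly"
  assumes "finite S" "inj_on z S" "\<forall>k\<in>S. poly D (z k) = 0"
    and "degree D = card S" "lead_coeff D = C" "C > 0"
    and "\<forall>k\<in>S. z k \<in> {L..U}" "x \<in> {L..U}" "n \<in> S"
  shows "\<bar>poly D x\<bar> \<le> C * (U - L) ^ (card S - 1) * \<bar>x - z n\<bar>"
proof -
  define P where "P = (\<Prod>k\<in>S. [:-z k, 1:])"
  obtain Q where Q: "D = P * Q" using prod_dvd_roots[OF assms(1-3)] unfolding P_def by (auto elim: dvdE)
  have D0: "D \<noteq> 0" using assms(5,6) by auto
  have P0: "P \<noteq> 0" unfolding P_def by (simp add: prod_zero_iff assms(1))
  have Q0: "Q \<noteq> 0" using D0 Q by auto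
  have dP: "degree P = card S" unfolding P_def by (subst degree_prod_sum_eq) auto
  have lP: "lead_coeff P = 1" unfolding P_def by (simp add: lead_coeff_prod)
  have "degree Q = 0" using degree_mult_eq[OF P0 Q0] Q dP assms(4) by simp
  then obtain c where c: "Q = [:c:]" by (metis degree_eq_zeroE)
  have "lead_coeff D = c" using Q c lP by (simp only: lead_coeff_mult) simp
  then have "c = C" using assms(5) by simp
  then have px: "poly D x = C * (\<Prod>k\<in>S. x - z k)" using Q c unfolding P_def by (simp add: poly_prod)
  have "\<bar>\<Prod>k\<in>S. x - z k\<bar> = \<bar>x - z n\<bar> * (\<Prod>k\<in>S - {n}. \<bar>x - z k\<bar>)"
    using assms(1,9) by (simp add: prod.remove abs_mult flip: abs_prod)
  also have "(\<Prod>k\<in>S - {n}. \<bar>x - z k\<bar>) \<le> (\<Prod>k\<in>S - {n}. (U - L))"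
    by (rule prod_mono) (use assms(7,8) in auto)
  also have "(\<Prod>k\<in>S - {n}. (U - L)) = (U - L) ^ (card S - 1)"
    using assms(1,9) by (simp add: card_Diff_singleton)
  finally have "\<bar>\<Prod>k\<in>S. x - z k\<bar> \<le> \<bar>x - z n\<bar> * (U - L) ^ (card S - 1)"
    by (simp add: mult_left_mono)
  then show ?thesis using px assms(6) by (simp add: abs_mult mult_left_mono mult.assoc mult.commute mult.left_commute)
qed



lemma final_arith:
  fixes Pa l d :: real and p :: nat
  assumes "p \<ge> 1" "Pa > 0" "l > 0" "l \<le> d" "4 * Pa \<le> d ^ (p - 1) * l"
  shows "0 < ln (4 * d / l) \<and> ln (4 * d / l) \<le> real p * ln (d / Pa powr (1 / real p))"
proof -
  have d0: "d > 0" using assms by linarith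
  have "ln (4 * d / l) \<ge> ln 4" using assms d0 by (subst ln_le_cancel_iff) (auto simp: field_simps)
  moreover have "ln (4::real) > 0" by simp
  ultimately have pos: "0 < ln (4 * d / l)" by linarith
  have e1: "ln (4 * d / l) = ln 4 + ln d - ln l" using assms d0 by (simp add: ln_div ln_mult)
  have "ln (4 * Pa) \<le> ln (d ^ (p - 1) * l)" using assms d0 by (subst ln_le_cancel_iff) auto
  then have e2: "ln 4 + ln Pa \<le> real (p - 1) * ln d + ln l" using assms d0 by (simp add: ln_mult ln_realpow)
  have e3: "real p * ln (d / Pa powr (1 / real p)) = real p * ln d - ln Pa"
    using assms d0 by (simp add: ln_div ln_powr right_diff_distrib)
  have "real (p - 1) = real p - 1" using assms by simp
  then show ?thesis using pos e1 e2 e3 by (simp add: algebra_simps)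
qed



theorem theorem1p1:
  fixes p :: nat and a b :: "int \<Rightarrow> real" and lmin lmax :: "nat \<Rightarrow> real" and d :: real
  assumes "p \<ge> 2"
    and "\<And>n. a n > 0"
    and "\<And>n. a (n + int p) = a n"
    and "\<And>n. b (n + int p) = b n"
    and "is_band_decomposition a b p lmin lmax"
    and "lmax p - lmin 1 \<le> d"
  shows "1 / ln (d / ((\<Prod>k=1..p. a (int k)) powr (1 / real p)))
           \<le> (\<Sum>n=1..p. 1 / ln (4 * d / measure lebesgue {lmin n..lmax n}))"
proof -
  define Dl where "Dl = Up a b 0 1 (Suc p) + Up a b 1 0 p"
  define C where "C = (\<Prod>j=1..p. 1 / a (int j))"
  define Pa where "Pa = (\<Prod>k=1..p. a (int k))"
  define Dt where "Dt = discriminant a b p"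
  have Dt: "\<And>x. Dt x = poly Dl x" unfolding Dt_def Dl_def by (rule discriminant_poly)
  have p1: "p \<ge> 1" using assms(1) by simp
  have Pa0: "Pa > 0" unfolding Pa_def using assms(2) by (simp add: prod_pos)
  have CPa: "C = 1 / Pa" unfolding C_def Pa_def by (simp add: prod_dividef)
  have C0: "C > 0" using CPa Pa0 by simp
  have dU: "degree (Up a b 0 1 (Suc p)) = p" "lead_coeff (Up a b 0 1 (Suc p)) = C"
    using degU[of a b p, OF assms(2)] unfolding C_def by auto
  have dV: "degree (Up a b 1 0 p) < p" using degV[of a b p] p1 by linarith
  have degD: "degree Dl = p" unfolding Dl_def using dU dV by (simp add: degree_add_eq_left)
  have leadD: "lead_coeff Dl = C" unfolding degD unfolding Dl_def using dU dV
    by (simp add: coeff_eq_0)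
  note bd = assms(5)[unfolded is_band_decomposition_def, folded Dt_def]
  have lt: "\<And>n. n \<in> {1..p} \<Longrightarrow> lmin n < lmax n" using bd by blast
  have step: "\<And>n. n \<in> {1..<p} \<Longrightarrow> lmax n \<le> lmin (Suc n)" using bd by blast
  have chain: "\<And>n m. 1 \<le> n \<Longrightarrow> n < m \<Longrightarrow> m \<le> p \<Longrightarrow> lmax n \<le> lmin m"
  proof -
    fix n m :: nat assume h: "1 \<le> n" "n < m" "m \<le> p"
    then show "lmax n \<le> lmin m"
    proof (induction m rule: nat_induct)
      case 0 then show ?case by simp
    next
      case (Suc k)
      show ?case
      proof (cases "n = k")
        case True then show ?thesis using step[of k] Suc.prems by auto
      next
        case False
        then have "lmax n \<le> lmin k" using Suc by auto
        also have "lmin k < lmax k" using lt[of k] Suc.prems False by auto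
        also have "lmax k \<le> lmin (Suc k)" using step[of k] Suc.prems False by auto
        finally show ?thesis by simp
      qed
    qed
  qed
  define L where "L = lmin 1"
  define U where "U = lmax p"
  have inL: "\<And>n. n \<in> {1..p} \<Longrightarrow> L \<le> lmin n"
  proof -
    fix n assume n: "n \<in> {1..p}"
    show "L \<le> lmin n"
    proof (cases "n = 1")
      case True then show ?thesis by (simp add: L_def)
    next
      case False
      then show ?thesis using lt[of 1] chain[of 1 n] n p1 unfolding L_def by auto
    qed
  qed
  have inU: "\<And>n. n \<in> {1..p} \<Longrightarrow> lmax n \<le> U"
  proof -
    fix n assume n: "n \<in> {1..p}"
    show "lmax n \<le> U"
    proof (cases "n = p")
      case True then show ?thesis by (simp add: U_def)
    next
      case False
      then show ?thesis using lt[of p] chain[of n p] n p1 unfolding U_def by auto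
    qed
  qed
  have ends: "\<And>n. n \<in> {1..p} \<Longrightarrow> \<bar>Dt (lmin n)\<bar> = 2 \<and> \<bar>Dt (lmax n)\<bar> = 2 \<and> \<bar>Dt (lmax n) - Dt (lmin n)\<bar> = 4"
  proof -
    fix n assume n: "n \<in> {1..p}"
    have img: "Dt ` {lmin n..lmax n} = {-2..2}" and mo: "mono_on {lmin n..lmax n} Dt \<or> antimono_on {lmin n..lmax n} Dt"
      using bd n by auto
    have e1: "lmin n \<in> {lmin n..lmax n}" "lmax n \<in> {lmin n..lmax n}" using lt[OF n] by auto
    obtain y1 where y1: "y1 \<in> {lmin n..lmax n}" "Dt y1 = -2" proof -
      have "(-2::real) \<in> Dt ` {lmin n..lmax n}" unfolding img by simp
      then obtain y where "y \<in> {lmin n..lmax n}" "-2 = Dt y" by (rule imageE)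
      then show ?thesis using that by simp
    qed
    obtain y2 where y2: "y2 \<in> {lmin n..lmax n}" "Dt y2 = 2" proof -
      have "(2::real) \<in> Dt ` {lmin n..lmax n}" unfolding img by simp
      then obtain y where "y \<in> {lmin n..lmax n}" "2 = Dt y" by (rule imageE)
      then show ?thesis using that by simp
    qed
    have b1: "Dt (lmin n) \<in> {-2..2}" "Dt (lmax n) \<in> {-2..2}" using img e1 by auto
    from mo show "\<bar>Dt (lmin n)\<bar> = 2 \<and> \<bar>Dt (lmax n)\<bar> = 2 \<and> \<bar>Dt (lmax n) - Dt (lmin n)\<bar> = 4"
    proof
      assume m: "mono_on {lmin n..lmax n} Dt"
      have "Dt (lmin n) \<le> Dt y1" using monotone_onD[OF m e1(1) y1(1)] y1 by auto
      moreover have "Dt y2 \<le> Dt (lmax n)" using monotone_onD[OF m y2(1) e1(2)] y2 by auto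
      ultimately show ?thesis using b1 y1 y2 by auto
    next
      assume m: "antimono_on {lmin n..lmax n} Dt"
      have "Dt y2 \<le> Dt (lmin n)" using monotone_onD[OF m e1(1) y2(1)] y2 by auto
      moreover have "Dt (lmax n) \<le> Dt y1" using monotone_onD[OF m y1(1) e1(2)] y1 by auto
      ultimately show ?thesis using b1 y1 y2 by auto
    qed
  qed
  have exz: "\<And>n. n \<in> {1..p} \<Longrightarrow> \<exists>z. z \<in> {lmin n<..<lmax n} \<and> Dt z = 0"
  proof -
    fix n assume n: "n \<in> {1..p}"
    have "(0::real) \<in> Dt ` {lmin n..lmax n}" using bd n by auto
    then obtain z where z: "z \<in> {lmin n..lmax n}" "Dt z = 0" by auto
    have "z \<noteq> lmin n" "z \<noteq> lmax n" using ends[OF n] z by auto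
    then have "z \<in> {lmin n<..<lmax n}" using z by auto
    then show "\<exists>z. z \<in> {lmin n<..<lmax n} \<and> Dt z = 0" using z by blast
  qed
  define z where "z n = (SOME z. z \<in> {lmin n<..<lmax n} \<and> Dt z = 0)" for n
  have z: "\<And>n. n \<in> {1..p} \<Longrightarrow> z n \<in> {lmin n<..<lmax n} \<and> Dt (z n) = 0"
    unfolding z_def by (rule someI_ex, rule exz)
  have inj: "inj_on z {1..p}"
  proof (rule inj_onI)
    fix n m assume n: "n \<in> {1..p}" and m: "m \<in> {1..p}" and e: "z n = z m"
    show "n = m"
    proof (rule ccontr)
      assume "n \<noteq> m"
      then consider "n < m" | "m < n" by linarith
      then show False
      proof cases
        case 1
        then have "z n < z m" using z[OF n] z[OF m] chain[of n m] n m by fastforce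
        then show False using e by simp
      next
        case 2
        then have "z m < z n" using z[OF n] z[OF m] chain[of m n] n m by fastforce
        then show False using e by simp
      qed
    qed
  qed
  have zLU: "\<forall>k\<in>{1..p}. z k \<in> {L..U}" using z inL inU by fastforce
  have roots: "\<forall>k\<in>{1..p}. poly Dl (z k) = 0" using z Dt by auto
  have band: "\<And>n. n \<in> {1..p} \<Longrightarrow> 4 * Pa \<le> (U - L) ^ (p - 1) * (lmax n - lmin n)"
  proof -
    fix n assume n: "n \<in> {1..p}"
    have rb: "\<And>x. x \<in> {L..U} \<Longrightarrow> \<bar>poly Dl x\<bar> \<le> C * (U - L) ^ (p - 1) * \<bar>x - z n\<bar>"
      using root_bound[of "{1..p}" z Dl C L U _ n] inj roots degD leadD C0 zLU n by auto
    have x1: "lmax n \<in> {L..U}" "lmin n \<in> {L..U}" using inL[OF n] inU[OF n] lt[OF n] by auto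
    have "4 \<le> \<bar>Dt (lmax n)\<bar> + \<bar>Dt (lmin n)\<bar>" using ends[OF n] by linarith
    also have "\<dots> \<le> C * (U - L) ^ (p - 1) * \<bar>lmax n - z n\<bar> + C * (U - L) ^ (p - 1) * \<bar>lmin n - z n\<bar>"
      using rb[OF x1(1)] rb[OF x1(2)] Dt by (intro add_mono) auto
    also have "\<dots> = C * (U - L) ^ (p - 1) * (lmax n - lmin n)"
      using z[OF n] by (simp add: algebra_simps)
    finally have "4 \<le> C * ((U - L) ^ (p - 1) * (lmax n - lmin n))" by (simp add: mult.assoc)
    then show "4 * Pa \<le> (U - L) ^ (p - 1) * (lmax n - lmin n)"
      using Pa0 unfolding CPa by (simp add: field_simps)
  qed
  have sLU: "U - L > 0" using inL[of 1] inU[of 1] lt[of 1] p1 by auto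
  have sd: "U - L \<le> d" using assms(6) unfolding U_def L_def .
  define Y where "Y = ln (d / Pa powr (1 / real p))"
  have each: "\<And>n. n \<in> {1..p} \<Longrightarrow> 0 < ln (4 * d / (lmax n - lmin n)) \<and> ln (4 * d / (lmax n - lmin n)) \<le> real p * Y"
  proof -
    fix n assume n: "n \<in> {1..p}"
    have "(U - L) ^ (p - 1) \<le> d ^ (p - 1)" using sLU sd by (intro power_mono) auto
    then have "4 * Pa \<le> d ^ (p - 1) * (lmax n - lmin n)"
      using band[OF n] lt[OF n] by (meson diff_gt_0_iff_gt dual_order.trans less_imp_le mult_right_mono)
    moreover have "lmax n - lmin n \<le> d" using inL[OF n] inU[OF n] sd by linarith
    ultimately show "?thesis n" unfolding Y_def using final_arith[OF p1 Pa0, of "lmax n - lmin n" d] lt[OF n] by auto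
  qed
  have Y0: "Y > 0"
  proof -
    have "0 < real p * Y" using each[of 1] p1 by auto
    then show ?thesis using p1 by (simp add: zero_less_mult_iff)
  qed
  have "(\<Sum>n=1..p. 1 / (real p * Y)) \<le> (\<Sum>n=1..p. 1 / ln (4 * d / measure lebesgue {lmin n..lmax n}))"
  proof (rule sum_mono)
    fix n assume n: "n \<in> {1..p}"
    have "measure lebesgue {lmin n..lmax n} = lmax n - lmin n" using lt[OF n] by simp
    then show "1 / (real p * Y) \<le> 1 / ln (4 * d / measure lebesgue {lmin n..lmax n})"
      using each[OF n] by (simp add: frac_le)
  qed
  moreover have "(\<Sum>n=1..p. 1 / (real p * Y)) = 1 / Y" using p1 by simp
  ultimately show ?thesis unfolding Y_def Pa_def by simp
qed

end
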